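(* We have $$\limsup_{m\to\infty}\frac{b_m\,\log\log\log m}{\log\log m}\ge 8;$$ in particular the sequence $(b_m)_{m\ge1}$ is unbounded.
   Context: For $n\ge 1$, $\phi_n(X)$ is the $n$-th cyclotomic polynomial (degree $\varphi(n)$, Euler's totient), and $\Phi_n(X,Y)=Y^{\varphi(n)}\phi_n(X/Y)$. For an integer $m\ge1$, $b_m$ is the number of triples $(n,x,y)\in\mathbb Z^3$ with $\varphi(n)>2$, $\max\{|x|,|y|\}\ge2$ and $\Phi_n(x,y)=m$. *)

theory Defs
  imports "HOL-Analysis.Analysis" "HOL-Number_Theory.Totient"
    "HOL-Computational_Algebra.Polynomial"
begin

definition cyclotomic :: "nat \<Rightarrow> complex poly" where
  "cyclotomic n = (\<Prod>k\<in>{k\<in>{1..n}. coprime k n}. [:- cis (2 * pi * real k / real n), 1:])"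

text \<open>Homogenization: Phi_n(X,Y) = Y^phi(n) phi_n(X/Y), written out coefficientwise.\<close>
definition cyclo_form :: "nat \<Rightarrow> int \<Rightarrow> int \<Rightarrow> complex" where
  "cyclo_form n x y = (\<Sum>i\<le>totient n. coeff (cyclotomic n) i * of_int x ^ i * of_int y ^ (totient n - i))"

definition b_count :: "nat \<Rightarrow> nat" where
  "b_count m = card {(n::int, x::int, y::int). n \<ge> 1 \<and> totient (nat n) > 2 \<and>
      max \<bar>x\<bar> \<bar>y\<bar> \<ge> 2 \<and> cyclo_form (nat n) x y = of_int (int m)}"

end

theory Submission
  imports Defs
begin


abbreviation zz :: "nat \<Rightarrow> nat \<Rightarrow> complex" where
  "zz n k \<equiv> cis (2 * pi * real k / real n)"

lemma degree_xn1: "n > 0 \<Longrightarrow> degree (monom 1 n - 1 :: complex poly) = n"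
proof -
  assume n: "n > 0"
  have "monom 1 n - 1 = monom 1 n + (- 1 :: complex poly)" by simp
  also have "degree \<dots> = n" using n by (subst degree_add_eq_left) (auto simp: degree_monom_eq)
  finally show ?thesis .
qed

lemma xn_minus_1_lt:
  assumes "n > 0"
  shows "monom 1 n - 1 = (\<Prod>k<n. [:- zz n k, 1:] :: complex poly)"
proof -
  let ?q = "(\<Prod>k<n. [:- zz n k, 1:] :: complex poly)"
  let ?p = "monom 1 n - 1 :: complex poly"
  have degp: "degree ?p = n" using assms by (rule degree_xn1)
  have lcp: "coeff ?p n = 1" using assms by (simp add: coeff_monom)
  have degq: "degree ?q = n"
    by (subst degree_prod_eq_sum_degree) auto
  have lcq: "coeff ?q n = 1"
    using lead_coeff_prod[of "\<lambda>k. [:- zz n k, 1:]" "{..<n}"] degq by simp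
  have roots: "poly (?p - ?q) z = 0" if "z \<in> {z. z ^ n = 1}" for z
  proof -
    from that Complex.bij_betw_roots_unity[OF assms] obtain k where k: "k < n" "z = zz n k"
      unfolding bij_betw_def by (metis (no_types, lifting) imageE lessThan_iff)
    have "poly ?q z = 0" unfolding poly_prod using k
      by (intro prod_zero) auto
    moreover have "poly ?p z = 0" using that by (simp add: poly_monom)
    ultimately show ?thesis by simp
  qed
  have "?p - ?q = 0"
  proof (rule ccontr)
    assume ne: "?p - ?q \<noteq> 0"
    have "degree (?p - ?q) \<le> n" using degp degq degree_diff_le by (metis order_refl)
    moreover have "coeff (?p - ?q) n = 0" using lcp lcq by simp
    ultimately have "degree (?p - ?q) < n" using ne
      by (metis le_neq_implies_less leading_coeff_0_iff)
    moreover have "card {z::complex. z ^ n = 1} = n"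
      using bij_betw_same_card[OF Complex.bij_betw_roots_unity[OF assms]] by simp
    ultimately show False
      using poly_eqI_degree[of "{z::complex. z ^ n = 1}" "?p - ?q" 0] roots ne by auto
  qed
  then show ?thesis by simp
qed

lemma xn_minus_1:
  assumes "n > 0"
  shows "monom 1 n - 1 = (\<Prod>k\<in>{1..n}. [:- zz n k, 1:] :: complex poly)"
proof -
  have a: "{..<n} = insert 0 {1..<n}" using assms by auto
  have b: "{1..n} = insert n {1..<n}" using assms by auto
  have "zz n n = 1" using assms by simp
  then show ?thesis
    unfolding xn_minus_1_lt[OF assms] a b by (simp add: mult.commute)
qed

lemma prod_divisors:
  fixes f :: "complex \<Rightarrow> 'b :: comm_monoid_mult"
  assumes "n > 0"
  shows "(\<Prod>k\<in>{1..n}. f (zz n k)) = (\<Prod>d | d dvd n. \<Prod>j\<in>totatives d. f (zz d j))"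
proof -
  define A where "A = (\<lambda>d. {k\<in>{0<..n}. gcd k n = d})"
  have "{1..n} = (\<Union>d\<in>{d. d dvd n}. A d)" by safe (auto simp: A_def)
  then have "(\<Prod>k\<in>{1..n}. f (zz n k)) = (\<Prod>d | d dvd n. \<Prod>k\<in>A d. f (zz n k))"
    using assms by (simp only:, intro prod.UNION_disjoint) (auto simp: A_def)
  also have "\<dots> = (\<Prod>d | d dvd n. \<Prod>j\<in>totatives (n div d). f (zz (n div d) j))"
  proof (rule prod.cong[OF refl])
    fix d assume d: "d \<in> {d. d dvd n}"
    have bij: "bij_betw (\<lambda>k. k * d) (totatives (n div d)) (A d)"
      unfolding A_def using d assms by (intro bij_betw_totatives_gcd_eq) auto
    have "(\<Prod>k\<in>A d. f (zz n k)) = (\<Prod>j\<in>totatives (n div d). f (zz n (j * d)))"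
      using prod.reindex_bij_betw[OF bij, of "\<lambda>k. f (zz n k)"] by simp
    also have "\<dots> = (\<Prod>j\<in>totatives (n div d). f (zz (n div d) j))"
    proof (intro prod.cong refl arg_cong[where f=f])
      fix j
      from d obtain e where e: "n = d * e" by auto
      have "d > 0" "e > 0" using assms e by auto
      then show "zz n (j * d) = zz (n div d) j" using e
        by (simp add: field_simps)
    qed
    finally show "(\<Prod>k\<in>A d. f (zz n k)) = (\<Prod>j\<in>totatives (n div d). f (zz (n div d) j))" .
  qed
  also have "\<dots> = (\<Prod>d | d dvd n. \<Prod>j\<in>totatives d. f (zz d j))"
    by (rule prod.reindex_bij_witness[of "{d. d dvd n}" "(div) n" "(div) n" "{d. d dvd n}"
         "\<lambda>e. \<Prod>j\<in>totatives e. f (zz e j)" "\<lambda>e. \<Prod>j\<in>totatives (n div e). f (zz (n div e) j)"])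
      (insert assms, auto elim!: dvdE)
  finally show ?thesis .
qed


lemma cyclotomic_alt: "cyclotomic n = (\<Prod>k\<in>totatives n. [:- zz n k, 1:])"
  unfolding cyclotomic_def totatives_def by (intro prod.cong) auto

lemma prod_cyclotomic:
  assumes "n > 0"
  shows "(\<Prod>d | d dvd n. cyclotomic d) = monom 1 n - 1"
  unfolding xn_minus_1[OF assms] prod_divisors[OF assms, of "\<lambda>z. [:- z, 1:]"] cyclotomic_alt ..


definition intp :: "complex poly \<Rightarrow> bool" where
  "intp p \<longleftrightarrow> (\<forall>i. coeff p i \<in> \<int>)"

lemma intp_0 [simp]: "intp 0" by (simp add: intp_def)
lemma intp_1 [simp]: "intp 1" by (simp add: intp_def coeff_1)
lemma intp_monom: "c \<in> \<int> \<Longrightarrow> intp (monom c k)" by (simp add: intp_def coeff_monom)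
lemma intp_add: "intp p \<Longrightarrow> intp q \<Longrightarrow> intp (p + q)" by (simp add: intp_def)
lemma intp_diff: "intp p \<Longrightarrow> intp q \<Longrightarrow> intp (p - q)" by (simp add: intp_def)
lemma intp_mult: "intp p \<Longrightarrow> intp q \<Longrightarrow> intp (p * q)"
  unfolding intp_def coeff_mult by (auto intro!: Ints_sum Ints_mult)
lemma intp_prod: "(\<And>x. x \<in> A \<Longrightarrow> intp (f x)) \<Longrightarrow> intp (\<Prod>x\<in>A. f x)"
  by (induction A rule: infinite_finite_induct) (auto intro: intp_mult)

lemma intp_div:
  fixes q r :: "complex poly"
  assumes "intp q" "lead_coeff q = 1" "intp (q * r)"
  shows "intp r"
  using assms(3)
proof (induction "degree r" arbitrary: r rule: less_induct)
  case less
  show ?case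
  proof (cases "r = 0")
    case True then show ?thesis by simp
  next
    case False
    define c where "c = lead_coeff r"
    define r' where "r' = r - monom c (degree r)"
    have "lead_coeff (q*r) = c" by (simp add: lead_coeff_mult assms(2) c_def)
    hence cI: "c \<in> \<int>" using less.prems unfolding intp_def by metis
    have "q * r' = q * r - q * monom c (degree r)" by (simp add: r'_def algebra_simps)
    hence qr': "intp (q * r')" using intp_diff intp_mult assms(1) less.prems intp_monom cI by metis
    have "intp r'"
    proof (cases "r' = 0")
      case True thus ?thesis by simp
    next
      case False
      have le: "degree r' \<le> degree r" unfolding r'_def
        by (intro degree_diff_le order_refl degree_monom_le)
      have "coeff r' (degree r) = 0" by (simp add: r'_def c_def)
      hence "degree r' \<noteq> degree r" using False by (metis leading_coeff_0_iff)
      hence "degree r' < degree r" using le by simp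
      then show ?thesis using less.hyps qr' by blast
    qed
    then have "intp (r' + monom c (degree r))" using intp_add intp_monom cI by blast
    thus ?thesis by (simp add: r'_def)
  qed
qed

lemma lead_coeff_cyclotomic [simp]: "lead_coeff (cyclotomic n) = 1"
  unfolding cyclotomic_alt lead_coeff_prod by simp

lemma degree_cyclotomic [simp]: "degree (cyclotomic n) = totient n"
  unfolding cyclotomic_alt totient_def
  by (subst degree_prod_eq_sum_degree) auto

lemma coeff_cyclotomic_top [simp]: "coeff (cyclotomic n) (totient n) = 1"
  using lead_coeff_cyclotomic[of n] by (simp del: lead_coeff_cyclotomic)

lemma cyclotomic_nonzero [simp]: "cyclotomic n \<noteq> 0"
  using lead_coeff_cyclotomic[of n] by (metis leading_coeff_0_iff zero_neq_one)

lemma intp_cyclotomic: "n > 0 \<Longrightarrow> intp (cyclotomic n)"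
proof (induction n rule: less_induct)
  case (less n)
  define D where "D = {d. d dvd n \<and> d < n}"
  have fD: "finite D" unfolding D_def by auto
  have split: "{d. d dvd n} = insert n D" using less.prems by (auto simp: D_def dest: dvd_imp_le)
  have "n \<notin> D" by (simp add: D_def)
  hence "monom 1 n - 1 = cyclotomic n * (\<Prod>d\<in>D. cyclotomic d)"
    using prod_cyclotomic[OF less.prems] split fD by simp
  hence eq: "(\<Prod>d\<in>D. cyclotomic d) * cyclotomic n = monom 1 n - 1" by (simp add: mult.commute)
  have iQ: "intp (\<Prod>d\<in>D. cyclotomic d)"
    using less.IH less.prems by (intro intp_prod) (auto simp: D_def intro: Nat.gr0I)
  have lQ: "lead_coeff (\<Prod>d\<in>D. cyclotomic d) = 1" by (simp add: lead_coeff_prod)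
  have "intp (monom 1 n - 1)" by (intro intp_diff intp_monom) auto
  then show ?case using intp_div[OF iQ lQ] eq by simp
qed

lemma poly_intp_Ints: "intp p \<Longrightarrow> z \<in> \<int> \<Longrightarrow> poly p z \<in> \<int>"
  unfolding poly_altdef intp_def by (auto intro!: Ints_sum Ints_mult Ints_power)

lemma Ints_nonzero_norm: "(z::complex) \<in> \<int> \<Longrightarrow> z \<noteq> 0 \<Longrightarrow> norm z \<ge> 1"
  by (auto elim!: Ints_cases)

lemma cyclo_form_prod:
  "cyclo_form n x y = (\<Prod>k\<in>totatives n. (of_int x - zz n k * of_int y))"
proof -
  let ?p = "cyclotomic n"
  let ?d = "totient n"
  have cd: "card (totatives n) = ?d" by (simp add: totient_def)
  show ?thesis
  proof (cases "y = 0")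
    case True
    have "cyclo_form n x y = (\<Sum>i\<le>?d. if i = ?d then of_int x ^ ?d else 0)"
      unfolding cyclo_form_def using True
      by (intro sum.cong refl) (auto simp: power_0_left)
    also have "\<dots> = of_int x ^ ?d" by simp
    also have "\<dots> = (\<Prod>k\<in>totatives n. (of_int x - zz n k * of_int y))"
      using True cd by simp
    finally show ?thesis .
  next
    case False
    let ?y = "of_int y :: complex"
    have y0: "?y \<noteq> 0" using False by simp
    have "cyclo_form n x y = (\<Sum>i\<le>?d. ?y ^ ?d * (coeff ?p i * (of_int x / ?y) ^ i))"
      unfolding cyclo_form_def
    proof (intro sum.cong refl)
      fix i assume "i \<in> {..?d}"
      hence "?y ^ ?d = ?y ^ i * ?y ^ (?d - i)" by (simp add: power_add[symmetric])
      thus "coeff ?p i * of_int x ^ i * ?y ^ (?d - i) = ?y ^ ?d * (coeff ?p i * (of_int x / ?y) ^ i)"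
        using y0 by (simp add: power_divide field_simps)
    qed
    also have "\<dots> = ?y ^ ?d * poly ?p (of_int x / ?y)"
      by (simp add: poly_altdef sum_distrib_left)
    also have "\<dots> = (\<Prod>k\<in>totatives n. ?y * (of_int x / ?y - zz n k))"
      by (simp add: cyclotomic_alt poly_prod prod.distrib cd[symmetric])
    also have "\<dots> = (\<Prod>k\<in>totatives n. (of_int x - zz n k * ?y))"
      using y0 by (intro prod.cong refl) (simp add: field_simps)
    finally show ?thesis .
  qed
qed



lemma unit_sq: "norm (w::complex) = 1 \<Longrightarrow> (Re w)^2 + (Im w)^2 = 1"
  by (metis cmod_power2 power_one)

lemma factor_sq:
  assumes "norm (w::complex) = 1"
  shows "norm (of_int x - w * of_int y)^2 = real_of_int x ^ 2 + real_of_int y ^ 2 - 2 * real_of_int x * real_of_int y * Re w"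
proof -
  have u: "(Re w)^2 + (Im w)^2 = 1" using assms by (rule unit_sq)
  have a: "norm (of_int x - w * of_int y)^2 = (real_of_int x - Re w * real_of_int y)^2 + (Im w * real_of_int y)^2"
    by (simp add: cmod_power2)
  have b: "(real_of_int x - Re w * real_of_int y)^2 + (Im w * real_of_int y)^2 = real_of_int x ^ 2 + real_of_int y ^ 2 * ((Re w)^2 + (Im w)^2) - 2 * real_of_int x * real_of_int y * Re w"
    by (simp add: power2_eq_square algebra_simps)
  show ?thesis by (simp only: a b u mult_1_right)
qed

lemma factor_ge_M:
  assumes "norm (w::complex) = 1"
  shows "real_of_int (max \<bar>x\<bar> \<bar>y\<bar>) * \<bar>Im w\<bar> \<le> norm (of_int x - w * of_int y)"
proof -
  have u: "(Re w)^2 + (Im w)^2 = 1" using assms by (rule unit_sq)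
  have q: "norm (of_int x - w * of_int y)^2 = real_of_int x ^ 2 + real_of_int y ^ 2 - 2 * real_of_int x * real_of_int y * Re w"
    using assms by (rule factor_sq)
  have e10: "(real_of_int x - Re w * real_of_int y)^2 + (Im w * real_of_int y)^2 = real_of_int x ^ 2 + real_of_int y ^ 2 * ((Re w)^2 + (Im w)^2) - 2 * real_of_int x * real_of_int y * Re w"
    by (simp add: power2_eq_square algebra_simps)
  have e1: "real_of_int x ^ 2 + real_of_int y ^ 2 - 2 * real_of_int x * real_of_int y * Re w = (real_of_int x - Re w * real_of_int y)^2 + (Im w * real_of_int y)^2"
    unfolding e10 u by simp
  have e20: "(real_of_int y - Re w * real_of_int x)^2 + (Im w * real_of_int x)^2 = real_of_int y ^ 2 + real_of_int x ^ 2 * ((Re w)^2 + (Im w)^2) - 2 * real_of_int x * real_of_int y * Re w"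
    by (simp add: power2_eq_square algebra_simps)
  have e2: "real_of_int x ^ 2 + real_of_int y ^ 2 - 2 * real_of_int x * real_of_int y * Re w = (real_of_int y - Re w * real_of_int x)^2 + (Im w * real_of_int x)^2"
    unfolding e20 u by simp
  have "(real_of_int (max \<bar>x\<bar> \<bar>y\<bar>) * \<bar>Im w\<bar>)^2 \<le> norm (of_int x - w * of_int y)^2"
  proof (cases "\<bar>x\<bar> \<le> \<bar>y\<bar>")
    case True
    hence "real_of_int (max \<bar>x\<bar> \<bar>y\<bar>) = \<bar>real_of_int y\<bar>" by simp
    thus ?thesis unfolding q e1 by (simp add: power_mult_distrib mult.commute)
  next
    case False
    hence "real_of_int (max \<bar>x\<bar> \<bar>y\<bar>) = \<bar>real_of_int x\<bar>" by simp
    thus ?thesis unfolding q e2 by (simp add: power_mult_distrib mult.commute)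
  qed
  thus ?thesis by (rule power2_le_imp_le) simp
qed

lemma factor_ge_diff:
  assumes "norm (w::complex) = 1"
  shows "\<bar>\<bar>x\<bar> - \<bar>y\<bar>\<bar> \<le> norm (of_int x - w * of_int y)"
proof -
  have nx: "norm (of_int x :: complex) = \<bar>of_int x\<bar>" by (simp only: norm_of_int)
  have ny: "norm (w * of_int y) = \<bar>of_int y\<bar>" using assms by (simp add: norm_mult norm_of_int)
  have "\<bar>norm (of_int x :: complex) - norm (w * of_int y)\<bar> \<le> norm (of_int x - w * of_int y)"
    by (rule norm_triangle_ineq3)
  thus ?thesis using nx ny by simp
qed

lemma one_pm:
  assumes "norm (w::complex) = 1"
  shows "norm (1 - w) * norm (1 + w) = 2 * \<bar>Im w\<bar>"
proof -
  have u: "(Re w)^2 + (Im w)^2 = 1" using assms by (rule unit_sq)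
  have "(norm (1 - w) * norm (1 + w))^2 = ((1 - Re w)^2 + (Im w)^2) * ((1 + Re w)^2 + (Im w)^2)"
    by (simp add: power_mult_distrib cmod_power2)
  also have "\<dots> = (2 - 2 * Re w + ((Re w)^2 + (Im w)^2 - 1)) * (2 + 2 * Re w + ((Re w)^2 + (Im w)^2 - 1))"
    by (simp add: power2_eq_square algebra_simps)
  also have "\<dots> = 4 - 4 * (Re w)^2" using u by (simp add: power2_eq_square algebra_simps)
  also have "\<dots> = 4 * (Im w)^2" using u by simp
  also have "\<dots> = (2 * \<bar>Im w\<bar>)^2" by (simp add: power_mult_distrib)
  finally show ?thesis by (rule power2_eq_imp_eq) auto
qed

lemma key_ineq:
  fixes a b :: int and c s Q :: real
  assumes "a \<ge> 0" "b \<ge> 0" "a \<noteq> b" "max a b \<ge> 2" "c^2 + s^2 = 1"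
    and Q1: "Q \<ge> (real_of_int (max a b) * \<bar>s\<bar>)^2" and Q2: "Q \<ge> 1"
    and Q3: "Q \<ge> real_of_int a ^ 2 + real_of_int b ^ 2 - 2 * a * b * \<bar>c\<bar>"
  shows "Q \<ge> 3 * \<bar>s\<bar>"
proof (cases "3 * \<bar>s\<bar> \<le> 1")
  case True thus ?thesis using Q2 by simp
next
  case False
  hence s3: "\<bar>s\<bar> \<ge> 1/3" by simp
  have s1: "\<bar>s\<bar> \<le> 1" using assms(5) by (metis abs_square_le_1 le_add_same_cancel2 zero_le_power2)
  have c1: "\<bar>c\<bar> \<le> 1" using assms(5) by (metis abs_square_le_1 le_add_same_cancel1 zero_le_power2)
  show ?thesis
  proof (cases "max a b \<ge> 3")
    case True
    hence "real_of_int (max a b) \<ge> 3" by linarith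
    hence "(real_of_int (max a b) * \<bar>s\<bar>)^2 \<ge> (3 * \<bar>s\<bar>)^2"
      by (intro power_mono mult_right_mono) auto
    also have "(3 * \<bar>s\<bar>)^2 \<ge> 3 * \<bar>s\<bar>"
    proof -
      have "3 * \<bar>s\<bar> * 1 \<le> 3 * \<bar>s\<bar> * (3 * \<bar>s\<bar>)" using s3 by (intro mult_left_mono) auto
      thus ?thesis by (simp add: power2_eq_square)
    qed
    finally show ?thesis using Q1 by linarith
  next
    case False
    hence ab: "(a = 2 \<and> b = 0) \<or> (a = 0 \<and> b = 2) \<or> (a = 2 \<and> b = 1) \<or> (a = 1 \<and> b = 2)"
      using assms(1-4) by auto
    show ?thesis
    proof (cases "a * b = 0")
      case True
      with ab have "real_of_int a ^ 2 + real_of_int b ^ 2 - 2 * a * b * \<bar>c\<bar> = 4" by auto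
      thus ?thesis using Q3 s1 by linarith
    next
      case False
      with ab have e: "real_of_int a ^ 2 + real_of_int b ^ 2 - 2 * a * b * \<bar>c\<bar> = 5 - 4 * \<bar>c\<bar>" by auto
      have "(5 - 4 * \<bar>c\<bar>)^2 - (3 * \<bar>s\<bar>)^2 = (5 * \<bar>c\<bar> - 4)^2"
        using assms(5) by (simp add: power2_eq_square algebra_simps)
      hence "(3 * \<bar>s\<bar>)^2 \<le> (5 - 4 * \<bar>c\<bar>)^2" using zero_le_power2[of "5 * \<bar>c\<bar> - 4"] by linarith
      hence "3 * \<bar>s\<bar> \<le> 5 - 4 * \<bar>c\<bar>" by (rule power2_le_imp_le) (use c1 in simp)
      thus ?thesis using Q3 e by linarith
    qed
  qed
qed



lemma zz_eq_1: "n \<ge> 1 \<Longrightarrow> zz n k = 1 \<longleftrightarrow> n dvd k"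
proof -
  assume n: "n \<ge> 1"
  have "zz n k = exp (2 * of_real pi * \<i> * of_nat k / of_nat n)"
    by (simp add: cis_conv_exp field_simps)
  thus ?thesis using complex_root_unity_eq_1[OF n, of k] by simp
qed

lemma norm_zz [simp]: "norm (zz n k) = 1" by simp

lemma zz_sq: "zz n k ^ 2 = zz n (2 * k)"
proof -
  have "zz n k ^ 2 = cis (2 * pi * real k / real n + 2 * pi * real k / real n)"
    unfolding power2_eq_square by (rule cis_mult)
  also have "\<dots> = zz n (2 * k)" by (simp add: field_simps)
  finally show ?thesis .
qed

lemma zz_ne_1:
  assumes "n \<ge> 2" "k \<in> totatives n" shows "zz n k \<noteq> 1"
proof
  assume "zz n k = 1"
  hence "n dvd k" using assms zz_eq_1[of n k] by simp
  moreover have "coprime k n" using assms by (simp add: in_totatives_iff)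
  ultimately have "n dvd 1" by (metis coprime_absorb_left dvd_refl coprime_common_divisor)
  thus False using assms by simp
qed

lemma zz_ne_m1:
  assumes "n \<ge> 3" "k \<in> totatives n" shows "zz n k \<noteq> -1"
proof
  assume "zz n k = -1"
  hence "zz n (2 * k) = 1" using zz_sq[where n=n and k=k] by simp
  hence "n dvd 2 * k" using assms zz_eq_1[of n "2*k"] by simp
  moreover have "coprime k n" using assms by (simp add: in_totatives_iff)
  ultimately have "n dvd 2" by (metis coprime_commute coprime_dvd_mult_left_iff)
  thus False using assms by (auto dest: dvd_imp_le)
qed

lemma Phi1_bound:
  assumes "n \<ge> 2"
  shows "(\<Prod>k\<in>totatives n. norm (1 - zz n k)) \<ge> 1"
proof -
  have "poly (cyclotomic n) 1 \<in> \<int>" using assms by (intro poly_intp_Ints intp_cyclotomic) auto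
  moreover have "poly (cyclotomic n) 1 = (\<Prod>k\<in>totatives n. 1 - zz n k)"
    by (simp add: cyclotomic_alt poly_prod)
  moreover have "(\<Prod>k\<in>totatives n. 1 - zz n k) \<noteq> 0"
    using zz_ne_1[OF assms] by (simp add: prod_zero_iff)
  ultimately have "norm (\<Prod>k\<in>totatives n. 1 - zz n k) \<ge> 1" using Ints_nonzero_norm by metis
  thus ?thesis by (simp add: prod_norm)
qed

lemma Phim1_bound:
  assumes "n \<ge> 3"
  shows "(\<Prod>k\<in>totatives n. norm (1 + zz n k)) \<ge> 1"
proof -
  have "poly (cyclotomic n) (-1) \<in> \<int>" using assms by (intro poly_intp_Ints intp_cyclotomic) auto
  moreover have "poly (cyclotomic n) (-1) = (\<Prod>k\<in>totatives n. - (1 + zz n k))"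
    unfolding cyclotomic_alt poly_prod by (intro prod.cong refl) simp
  moreover have "(\<Prod>k\<in>totatives n. - (1 + zz n k)) \<noteq> 0"
  proof -
    have neg: "- (1 + zz n k) \<noteq> 0" if "k \<in> totatives n" for k
      using zz_ne_m1[OF assms that] by (metis add.commute add_eq_0_iff neg_equal_0_iff_equal)
    show ?thesis using prod_zero_iff[OF finite_totatives, of "\<lambda>k. - (1 + zz n k)" n] neg by blast
  qed
  ultimately have "norm (\<Prod>k\<in>totatives n. - (1 + zz n k)) \<ge> 1" using Ints_nonzero_norm by metis
  moreover have "norm (\<Prod>k\<in>totatives n. - (1 + zz n k)) = (\<Prod>k\<in>totatives n. norm (1 + zz n k))"
    by (simp only: prod_norm[symmetric] norm_minus_cancel)
  ultimately show ?thesis by simp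
qed

lemma norm_cyclo_form: "norm (cyclo_form n x y) = (\<Prod>k\<in>totatives n. norm (of_int x - zz n k * of_int y))"
  by (simp add: cyclo_form_prod prod_norm)

lemma cyc_lower_M:
  assumes "n \<ge> 3" "max \<bar>x\<bar> \<bar>y\<bar> \<ge> 2"
  shows "norm (cyclo_form n x y) \<ge> (real_of_int (max \<bar>x\<bar> \<bar>y\<bar>) / 2) ^ totient n"
proof -
  let ?M = "real_of_int (max \<bar>x\<bar> \<bar>y\<bar>)"
  have "(?M / 2) ^ totient n = (\<Prod>k\<in>totatives n. ?M / 2)" by (simp add: totient_def)
  also have "\<dots> \<le> (\<Prod>k\<in>totatives n. ?M / 2) * ((\<Prod>k\<in>totatives n. norm (1 - zz n k)) * (\<Prod>k\<in>totatives n. norm (1 + zz n k)))"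
  proof -
    have a: "(\<Prod>k\<in>totatives n. norm (1 - zz n k)) \<ge> 1" using Phi1_bound[of n] assms by simp
    have b: "(\<Prod>k\<in>totatives n. norm (1 + zz n k)) \<ge> 1" using Phim1_bound[of n] assms by simp
    have "1 * 1 \<le> (\<Prod>k\<in>totatives n. norm (1 - zz n k)) * (\<Prod>k\<in>totatives n. norm (1 + zz n k))"
      by (rule mult_mono) (use a b in auto)
    moreover have "0 \<le> (\<Prod>k\<in>totatives n. ?M / 2)" using assms by (intro prod_nonneg) auto
    ultimately show ?thesis using mult_left_mono[of 1 _ "(\<Prod>k\<in>totatives n. ?M / 2)"] by simp
  qed
  also have "\<dots> = (\<Prod>k\<in>totatives n. ?M / 2 * (norm (1 - zz n k) * norm (1 + zz n k)))"
    by (simp only: prod.distrib)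
  also have "\<dots> = (\<Prod>k\<in>totatives n. ?M * \<bar>Im (zz n k)\<bar>)"
  proof (intro prod.cong refl)
    fix k
    have "norm (1 - zz n k) * norm (1 + zz n k) = 2 * \<bar>Im (zz n k)\<bar>" by (rule one_pm) simp
    thus "?M / 2 * (norm (1 - zz n k) * norm (1 + zz n k)) = ?M * \<bar>Im (zz n k)\<bar>" by simp
  qed
  also have "\<dots> \<le> norm (cyclo_form n x y)" unfolding norm_cyclo_form
  proof (intro prod_mono conjI)
    fix k
    show "0 \<le> ?M * \<bar>Im (zz n k)\<bar>" by simp
    show "?M * \<bar>Im (zz n k)\<bar> \<le> norm (of_int x - zz n k * of_int y)" by (rule factor_ge_M) simp
  qed
  finally show ?thesis .
qed



lemma cyc_lower_sq:
  assumes "n \<ge> 3" "max \<bar>x\<bar> \<bar>y\<bar> \<ge> 2"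
  shows "norm (cyclo_form n x y)^2 \<ge> (3/2)^totient n"
proof (cases "\<bar>x\<bar> = \<bar>y\<bar>")
  case True
  have x2: "2 \<le> \<bar>real_of_int x\<bar>" using assms True by simp
  obtain N where N: "\<And>k. norm (of_int x - zz n k * of_int y) = \<bar>real_of_int x\<bar> * N k"
    and N1: "(\<Prod>k\<in>totatives n. N k) \<ge> 1"
  proof (cases "y = x")
    case True
    show ?thesis
    proof (rule that[of "\<lambda>k. norm (1 - zz n k)"])
      fix k
      have "of_int x - zz n k * of_int y = of_int x * (1 - zz n k)" using True by (simp add: algebra_simps)
      thus "norm (of_int x - zz n k * of_int y) = \<bar>real_of_int x\<bar> * norm (1 - zz n k)"
        by (simp add: norm_mult)
    qed (use Phi1_bound[of n] assms in simp)
  next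
    case False
    hence yx: "y = - x" using \<open>\<bar>x\<bar> = \<bar>y\<bar>\<close> by (auto simp: abs_eq_iff)
    show ?thesis
    proof (rule that[of "\<lambda>k. norm (1 + zz n k)"])
      fix k
      have "of_int x - zz n k * of_int y = of_int x * (1 + zz n k)" using yx by (simp add: algebra_simps)
      thus "norm (of_int x - zz n k * of_int y) = \<bar>real_of_int x\<bar> * norm (1 + zz n k)"
        by (simp add: norm_mult)
    qed (use Phim1_bound[of n] assms in simp)
  qed
  have "norm (cyclo_form n x y) = (\<Prod>k\<in>totatives n. \<bar>real_of_int x\<bar> * N k)"
    unfolding norm_cyclo_form N ..
  also have "\<dots> = \<bar>real_of_int x\<bar> ^ totient n * (\<Prod>k\<in>totatives n. N k)"
    by (simp add: prod.distrib totient_def)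
  finally have eq: "norm (cyclo_form n x y) = \<bar>real_of_int x\<bar> ^ totient n * (\<Prod>k\<in>totatives n. N k)" .
  have "(2::real) ^ totient n * 1 \<le> \<bar>real_of_int x\<bar> ^ totient n * (\<Prod>k\<in>totatives n. N k)"
    by (intro mult_mono power_mono x2 N1) auto
  hence ge: "norm (cyclo_form n x y) \<ge> 2 ^ totient n" using eq by simp
  have "(3/2::real)^totient n \<le> 2 ^ totient n" by (intro power_mono) auto
  also have "(2::real) ^ totient n = 2 ^ totient n * 1" by simp
  also have "\<dots> \<le> 2 ^ totient n * 2 ^ totient n" by (intro mult_left_mono) auto
  also have "\<dots> = (2 ^ totient n)^2" by (simp add: power2_eq_square)
  also have "\<dots> \<le> norm (cyclo_form n x y)^2" using ge by (intro power_mono) auto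
  finally show ?thesis .
next
  case False
  let ?M = "real_of_int (max \<bar>x\<bar> \<bar>y\<bar>)"
  have fac: "3 * \<bar>Im (zz n k)\<bar> \<le> norm (of_int x - zz n k * of_int y)^2" for k
  proof (rule key_ineq[of "\<bar>x\<bar>" "\<bar>y\<bar>" "Re (zz n k)" "Im (zz n k)"])
    show "0 \<le> \<bar>x\<bar>" "0 \<le> \<bar>y\<bar>" "\<bar>x\<bar> \<noteq> \<bar>y\<bar>" "2 \<le> max \<bar>x\<bar> \<bar>y\<bar>" using False assms by auto
    show "(Re (zz n k))\<^sup>2 + (Im (zz n k))\<^sup>2 = 1" by (rule unit_sq) simp
    have "?M * \<bar>Im (zz n k)\<bar> \<le> norm (of_int x - zz n k * of_int y)" by (rule factor_ge_M) simp
    hence "(?M * \<bar>Im (zz n k)\<bar>)^2 \<le> norm (of_int x - zz n k * of_int y)^2"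
      by (intro power_mono) auto
    thus "(real_of_int (max \<bar>x\<bar> \<bar>y\<bar>) * \<bar>Im (zz n k)\<bar>)\<^sup>2 \<le> norm (of_int x - zz n k * of_int y)^2" by simp
    have d: "\<bar>\<bar>real_of_int x\<bar> - \<bar>real_of_int y\<bar>\<bar> \<le> norm (of_int x - zz n k * of_int y)"
      using factor_ge_diff[of "zz n k" x y] by simp
    have "(1::real) \<le> \<bar>\<bar>real_of_int x\<bar> - \<bar>real_of_int y\<bar>\<bar>" using False by linarith
    hence "1 \<le> norm (of_int x - zz n k * of_int y)" using d by linarith
    thus "1 \<le> norm (of_int x - zz n k * of_int y)^2" by (simp add: one_le_power)
    have q: "norm (of_int x - zz n k * of_int y)^2 = real_of_int x ^ 2 + real_of_int y ^ 2 - 2 * real_of_int x * real_of_int y * Re (zz n k)"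
      by (rule factor_sq) simp
    have "real_of_int x * real_of_int y * Re (zz n k) \<le> \<bar>real_of_int x * real_of_int y * Re (zz n k)\<bar>" by simp
    also have "\<dots> = \<bar>real_of_int x\<bar> * \<bar>real_of_int y\<bar> * \<bar>Re (zz n k)\<bar>" by (simp add: abs_mult)
    finally show "real_of_int \<bar>x\<bar> ^ 2 + real_of_int \<bar>y\<bar> ^ 2 - real_of_int (2 * \<bar>x\<bar> * \<bar>y\<bar>) * \<bar>Re (zz n k)\<bar>
        \<le> norm (of_int x - zz n k * of_int y)^2" unfolding q by simp
  qed
  have "(3/2::real) ^ totient n = (3/2::real) ^ totient n * 1" by simp
  also have "\<dots> \<le> (3/2) ^ totient n * ((\<Prod>k\<in>totatives n. norm (1 - zz n k)) * (\<Prod>k\<in>totatives n. norm (1 + zz n k)))"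
  proof -
    have a: "(\<Prod>k\<in>totatives n. norm (1 - zz n k)) \<ge> 1" using Phi1_bound[of n] assms by simp
    have b: "(\<Prod>k\<in>totatives n. norm (1 + zz n k)) \<ge> 1" using Phim1_bound[of n] assms by simp
    have "1 * 1 \<le> (\<Prod>k\<in>totatives n. norm (1 - zz n k)) * (\<Prod>k\<in>totatives n. norm (1 + zz n k))"
      by (rule mult_mono) (use a b in auto)
    thus ?thesis by (intro mult_left_mono) auto
  qed
  also have "\<dots> = (\<Prod>k\<in>totatives n. (3/2::real)) * ((\<Prod>k\<in>totatives n. norm (1 - zz n k)) * (\<Prod>k\<in>totatives n. norm (1 + zz n k)))"
    by (simp add: totient_def)
  also have "\<dots> = (\<Prod>k\<in>totatives n. 3/2 * (norm (1 - zz n k) * norm (1 + zz n k)))"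
    by (simp only: prod.distrib)
  also have "\<dots> = (\<Prod>k\<in>totatives n. 3 * \<bar>Im (zz n k)\<bar>)"
  proof (intro prod.cong refl)
    fix k
    have "norm (1 - zz n k) * norm (1 + zz n k) = 2 * \<bar>Im (zz n k)\<bar>" by (rule one_pm) simp
    thus "3/2 * (norm (1 - zz n k) * norm (1 + zz n k)) = 3 * \<bar>Im (zz n k)\<bar>" by simp
  qed
  also have "\<dots> \<le> (\<Prod>k\<in>totatives n. norm (of_int x - zz n k * of_int y)^2)"
    by (intro prod_mono conjI fac) simp
  also have "\<dots> = norm (cyclo_form n x y)^2"
    unfolding norm_cyclo_form by (simp add: prod_power_distrib)
  finally show ?thesis .
qed

lemma cyc_bounds:
  assumes "totient n > 2" "max \<bar>x\<bar> \<bar>y\<bar> \<ge> 2" "cyclo_form n x y = of_nat m"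
  shows "totient n \<le> 2 * m^2" "max \<bar>x\<bar> \<bar>y\<bar> \<le> 2 * int m"
proof -
  have n3: "n \<ge> 3" using assms(1) totient_le[of n] by linarith
  have nm: "norm (cyclo_form n x y) = real m" using assms(3) by simp
  have "1 + real (totient n) * (1/2) \<le> (1 + 1/2::real) ^ totient n"
    by (rule Bernoulli_inequality) simp
  also have "\<dots> = (3/2) ^ totient n" by simp
  also have "\<dots> \<le> real m ^ 2" using cyc_lower_sq[OF n3 assms(2)] nm by simp
  finally have "real (totient n) \<le> 2 * real (m^2)" by simp
  thus "totient n \<le> 2 * m^2" by linarith
  have "real_of_int (max \<bar>x\<bar> \<bar>y\<bar>) / 2 \<le> (real_of_int (max \<bar>x\<bar> \<bar>y\<bar>) / 2) ^ totient n"
    by (rule self_le_power) (use assms n3 in auto)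
  also have "\<dots> \<le> real m" using cyc_lower_M[OF n3 assms(2)] nm by simp
  finally show "max \<bar>x\<bar> \<bar>y\<bar> \<le> 2 * int m" by linarith
qed

lemma totient_small_dvd:
  assumes "n > 0" "totient n \<le> B"
  shows "n dvd fact (2 * B)"
proof (rule multiplicity_le_imp_dvd)
  show "n \<noteq> 0" using assms by simp
  fix p :: nat assume p: "prime p"
  show "multiplicity p n \<le> multiplicity p (fact (2 * B))"
  proof (cases "multiplicity p n = 0")
    case False
    let ?k = "multiplicity p n"
    have dv: "p ^ ?k dvd n" by (rule multiplicity_dvd)
    have "totient (p ^ ?k) \<le> totient n" using dv assms by (intro totient_dvd_mono) auto
    hence le: "p ^ (?k - 1) * (p - 1) \<le> B" using totient_prime_power[OF p, of ?k] False assms by simp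
    have p2: "p \<ge> 2" using p prime_ge_2_nat by blast
    have "p ^ ?k = p ^ (?k - 1) * p" using False by (metis power_minus_mult neq0_conv)
    also have "\<dots> \<le> p ^ (?k - 1) * (2 * (p - 1))" using p2 by (intro mult_left_mono) auto
    also have "\<dots> \<le> 2 * B" using le by simp
    finally have "p ^ ?k \<le> 2 * B" .
    moreover have "1 \<le> p ^ ?k" using p2 by simp
    ultimately have "p ^ ?k dvd fact (2 * B)" by (intro dvd_fact)
    thus ?thesis using p by (intro multiplicity_geI) (auto simp: fact_nonzero)
  qed simp
qed

lemma finite_totient_le: "finite {n::nat. totient n \<le> B}"
proof (rule finite_subset[of _ "{..fact (2 * B)}"])
  show "{n. totient n \<le> B} \<subseteq> {..fact (2 * B)}"
  proof
    fix n assume "n \<in> {n. totient n \<le> B}"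
    hence t: "totient n \<le> B" by simp
    show "n \<in> {..fact (2 * B)}"
    proof (cases "n = 0")
      case False
      hence "n dvd fact (2 * B)" using t totient_small_dvd by auto
      thus ?thesis by (auto intro: dvd_imp_le)
    qed simp
  qed
qed simp

lemma finite_bset: "finite {(n::int, x::int, y::int). n \<ge> 1 \<and> totient (nat n) > 2 \<and>
      max \<bar>x\<bar> \<bar>y\<bar> \<ge> 2 \<and> cyclo_form (nat n) x y = of_int (int m)}" (is "finite ?S")
proof (rule finite_subset)
  show "?S \<subseteq> (int ` {n. totient n \<le> 2 * m^2}) \<times> {-(2 * int m)..2 * int m} \<times> {-(2 * int m)..2 * int m}"
  proof (intro subsetI)
    fix t assume "t \<in> ?S"
    then obtain n x y :: int where t: "t = (n, x, y)" and
      h: "n \<ge> 1" "totient (nat n) > 2" "max \<bar>x\<bar> \<bar>y\<bar> \<ge> 2" "cyclo_form (nat n) x y = of_int (int m)"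
      by auto
    have h4: "cyclo_form (nat n) x y = of_nat m" using h(4) by simp
    note b = cyc_bounds[OF h(2,3) h4]
    have "n = int (nat n)" using h by simp
    moreover have "nat n \<in> {n. totient n \<le> 2 * m^2}" using b by simp
    ultimately have "n \<in> int ` {n. totient n \<le> 2 * m^2}" by blast
    moreover have "x \<in> {-(2 * int m)..2 * int m}" "y \<in> {-(2 * int m)..2 * int m}" using b(2) by auto
    ultimately show "t \<in> (int ` {n. totient n \<le> 2 * m^2}) \<times> {-(2 * int m)..2 * int m} \<times> {-(2 * int m)..2 * int m}"
      unfolding t by blast
  qed
  show "finite ((int ` {n. totient n \<le> 2 * m^2}) \<times> {-(2 * int m)..2 * int m} \<times> {-(2 * int m)..2 * int m})"
    using finite_totient_le by auto
qed



lemma cyc_2pow: "cyclotomic (2 ^ Suc j) = monom 1 (2 ^ j) + 1"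
proof -
  have d: "{d. d dvd (2::nat) ^ Suc j} = insert (2 ^ Suc j) {d. d dvd 2 ^ j}"
  proof -
    have "d dvd (2::nat) ^ Suc j \<longleftrightarrow> d = 2 ^ Suc j \<or> d dvd 2 ^ j" for d
    proof -
      have "d dvd (2::nat) ^ Suc j \<longleftrightarrow> (\<exists>i\<le>Suc j. d = 2 ^ i)"
        by (rule divides_primepow_nat[OF two_is_prime_nat])
      also have "\<dots> \<longleftrightarrow> d = 2 ^ Suc j \<or> (\<exists>i\<le>j. d = 2 ^ i)" by (metis le_Suc_eq order_refl)
      also have "(\<exists>i\<le>j. d = 2 ^ i) \<longleftrightarrow> d dvd (2::nat) ^ j"
        by (rule divides_primepow_nat[OF two_is_prime_nat, symmetric])
      finally show ?thesis .
    qed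
    thus ?thesis by blast
  qed
  have nin: "2 ^ Suc j \<notin> {d. d dvd (2::nat) ^ j}"
  proof
    assume "2 ^ Suc j \<in> {d. d dvd (2::nat) ^ j}"
    hence "(2::nat) ^ Suc j \<le> 2 ^ j" by (auto intro: dvd_imp_le)
    thus False by simp
  qed
  have fin: "finite {d. d dvd (2::nat) ^ j}" by simp
  have "monom 1 (2 ^ Suc j) - 1 = cyclotomic (2 ^ Suc j) * (\<Prod>d | d dvd (2::nat) ^ j. cyclotomic d)"
    using prod_cyclotomic[of "2 ^ Suc j"] d nin fin by simp
  also have "(\<Prod>d | d dvd (2::nat) ^ j. cyclotomic d) = monom 1 (2 ^ j) - 1"
    by (rule prod_cyclotomic) simp
  finally have e1: "monom 1 (2 ^ Suc j) - 1 = cyclotomic (2 ^ Suc j) * (monom 1 (2 ^ j) - 1)" .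
  have "(monom 1 (2 ^ j) + 1) * (monom 1 (2 ^ j) - (1::complex poly)) = monom 1 (2 ^ j) * monom 1 (2 ^ j) - 1"
    by (simp add: algebra_simps)
  also have "\<dots> = monom 1 (2 ^ Suc j) - 1" by (simp add: mult_monom mult_2)
  finally have e2: "monom 1 (2 ^ Suc j) - 1 = (monom 1 (2 ^ j) + 1) * (monom 1 (2 ^ j) - (1::complex poly))" ..
  have nz: "monom 1 (2 ^ j) - (1::complex poly) \<noteq> 0"
    using degree_xn1[of "2 ^ j"] by (metis degree_0 power_not_zero zero_neq_numeral neq0_conv)
  show ?thesis using e1 e2 nz by (metis mult_right_cancel)
qed

lemma cyclo_form_2pow: "cyclo_form (2 ^ Suc j) x y = of_int x ^ (2 ^ j) + of_int y ^ (2 ^ j)"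
proof -
  let ?N = "2 ^ j :: nat"
  have t: "totient (2 ^ Suc j) = ?N" using totient_prime_power_Suc[OF two_is_prime_nat, of j] by simp
  have c: "coeff (cyclotomic (2 ^ Suc j)) i = (if i = ?N then 1 else 0) + (if i = 0 then 1 else 0)" for i
    unfolding cyc_2pow by (simp add: coeff_monom coeff_1)
  define X where "X = (\<lambda>i. (of_int x :: complex) ^ i * of_int y ^ (?N - i))"
  have "cyclo_form (2 ^ Suc j) x y = (\<Sum>i\<le>?N. (if i = ?N then X i else 0) + (if i = 0 then X i else 0))"
    unfolding cyclo_form_def t c X_def by (intro sum.cong refl) simp
  also have "\<dots> = (\<Sum>i\<le>?N. if i = ?N then X i else 0) + (\<Sum>i\<le>?N. if i = 0 then X i else 0)"
    by (rule sum.distrib)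
  also have "\<dots> = X ?N + X 0" by simp
  also have "\<dots> = of_int x ^ ?N + of_int y ^ ?N" by (simp add: X_def)
  finally show ?thesis .
qed

lemma b_count_fermat:
  assumes "K \<ge> 2"
  shows "b_count (2 ^ (2 ^ K) + 1) \<ge> K - 1"
proof -
  define m :: nat where "m = 2 ^ (2 ^ K) + 1"
  define g where "g = (\<lambda>j::nat. (int (2 ^ Suc j), (2::int) ^ (2 ^ (K - j)), 1::int))"
  let ?S = "{(n::int, x::int, y::int). n \<ge> 1 \<and> totient (nat n) > 2 \<and>
      max \<bar>x\<bar> \<bar>y\<bar> \<ge> 2 \<and> cyclo_form (nat n) x y = of_int (int m)}"
  have sub: "g ` {2..K} \<subseteq> ?S"
  proof
    fix t assume "t \<in> g ` {2..K}"
    then obtain j where j: "j \<in> {2..K}" and t: "t = g j" by auto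
    have "totient (2 ^ Suc j) = 2 ^ j" using totient_prime_power_Suc[OF two_is_prime_nat, of j] by simp
    moreover have "(2::nat) ^ j \<ge> 2 ^ 2" using j by (intro power_increasing) auto
    ultimately have tot: "totient (nat (int (2 ^ Suc j))) > 2" unfolding nat_int by simp
    have "(2::int) ^ (2 ^ (K - j)) \<ge> 2 ^ 1" by (intro power_increasing) auto
    hence mx: "max \<bar>(2::int) ^ (2 ^ (K - j))\<bar> \<bar>1\<bar> \<ge> 2" by simp
    have e: "2 ^ (K - j) * 2 ^ j = (2::nat) ^ K" using j by (simp add: power_add[symmetric])
    have "cyclo_form (nat (int (2 ^ Suc j))) ((2::int) ^ (2 ^ (K - j))) 1
          = (2::complex) ^ (2 ^ (K - j) * 2 ^ j) + 1"
      by (simp only: nat_int cyclo_form_2pow) (simp add: power_mult)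
    also have "\<dots> = of_int (int m)" unfolding e m_def by simp
    moreover have "(1::int) \<le> 2 ^ Suc j" by (rule one_le_power) simp
    ultimately show "t \<in> ?S" using tot mx unfolding t g_def by simp
  qed
  have inj: "inj_on g {2..K}"
    unfolding g_def by (auto simp: inj_on_def)
  have "card (g ` {2..K}) \<le> card ?S" using finite_bset[of m] sub by (intro card_mono)
  moreover have "card (g ` {2..K}) = K - 1" using card_image[OF inj] by simp
  moreover have "b_count (2 ^ (2 ^ K) + 1) = card ?S" unfolding b_count_def m_def ..
  ultimately show ?thesis by simp
qed



lemma ln2_ge: "1/2 \<le> ln (2::real)"
proof -
  have "exp (1/2::real) * exp (1/2) = exp 1" by (simp add: exp_add[symmetric])
  hence "exp (1/2::real)^2 \<le> 2^2" using exp_le by (simp add: power2_eq_square)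
  hence "exp (1/2::real) \<le> 2" by (rule power2_le_imp_le) simp
  thus ?thesis by (subst ln_ge_iff) auto
qed

lemma ratio_ge:
  fixes K b :: nat
  assumes K: "real K \<ge> 2 * 3^16 + 1" and b: "b \<ge> K - 1"
  shows "real b * ln (ln (ln (real (2^(2^K)+1)))) / ln (ln (real (2^(2^K)+1))) \<ge> 8"
proof -
  define N :: nat where "N = 2^K"
  define M :: real where "M = real (2^(2^K)+1)"
  have K1: "K \<ge> 1"
  proof (rule ccontr)
    assume "\<not> K \<ge> 1" hence "K = 0" by simp
    thus False using K by simp
  qed
  have rN: "real N = 2 ^ K" by (simp add: N_def)
  have l2: "1/2 \<le> ln (2::real)" by (rule ln2_ge)
  have l2': "ln 2 < (1::real)" by (rule ln_2_less_1)
  have M1: "2 ^ N \<le> M" by (simp add: M_def N_def)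
  have M2: "M \<le> 2 ^ (N + 1)"
  proof -
    have "(1::real) \<le> 2 ^ N" by (rule one_le_power) simp
    thus ?thesis by (simp add: M_def N_def)
  qed
  have Mpos: "M > 0" using M1 by (metis less_le_trans zero_less_numeral zero_less_power)
  have lnM1: "real N * ln 2 \<le> ln M"
    using M1 Mpos by (subst ln_realpow[symmetric]) (auto)
  have lnM2: "ln M \<le> real (N + 1) * ln 2"
    using M2 Mpos by (subst ln_realpow[symmetric]) (auto)
  define A where "A = ln M"
  have "(2::real) ^ (K - 1) = 2 ^ K / 2" using K1 by (simp add: power_diff)
  also have "\<dots> \<le> real N * ln 2" using l2 rN by simp
  finally have A1: "2 ^ (K - 1) \<le> A" using lnM1 A_def by simp
  have Apos: "A > 0" using A1 zero_less_power[of "2::real" "K - 1"] by linarith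
  have "A \<le> real (N + 1)" using lnM2 l2' A_def
  proof -
    have "real (N + 1) * ln 2 \<le> real (N + 1) * 1" by (rule mult_left_mono) (use l2' in auto)
    hence h: "real (N + 1) * ln 2 \<le> real (N + 1)" by (simp only: mult_1_right)
    show ?thesis using h lnM2 unfolding A_def by linarith
  qed
  also have "\<dots> \<le> 2 ^ (K + 1)" using rN by (simp add: one_le_power)
  finally have A2: "A \<le> 2 ^ (K + 1)" .
  define L2 where "L2 = ln A"
  have "real (K - 1) * ln 2 \<le> L2" unfolding L2_def
    using A1 Apos by (subst ln_realpow[symmetric]) auto
  hence L2a: "(real K - 1) / 2 \<le> L2" using l2 K1
  proof -
    have "(real K - 1) / 2 = real (K - 1) * (1/2)" using K1 by (simp add: of_nat_diff)
    also have "\<dots> \<le> real (K - 1) * ln 2" by (rule mult_left_mono) (use l2 in auto)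
    also have "\<dots> \<le> L2" by fact
    finally show ?thesis .
  qed
  have "L2 \<le> real (K + 1) * ln 2" unfolding L2_def
    using A2 Apos by (subst ln_realpow[symmetric]) auto
  moreover have "real (K + 1) * ln 2 \<le> real (K + 1)"
  proof -
    have "real (K + 1) * ln 2 \<le> real (K + 1) * 1" by (rule mult_left_mono) (use l2' in auto)
    thus ?thesis by (simp only: mult_1_right)
  qed
  moreover have "real (K + 1) = real K + 1" by simp
  ultimately have L2b: "L2 \<le> real K + 1" by linarith
  have p316: "(0::real) < 3 ^ 16" by simp
  have k316: "3 ^ 16 \<le> (real K - 1) / 2" using K by simp
  have L2pos: "L2 > 0" using less_le_trans[OF p316 order_trans[OF k316 L2a]] .
  define L3 where "L3 = ln L2"
  have "exp 16 = exp (1::real) ^ 16" using exp_of_nat_mult[of 16 1] by simp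
  also have "\<dots> \<le> 3 ^ 16" by (intro power_mono exp_le) auto
  also have "\<dots> \<le> (real K - 1) / 2" using K by simp
  also have "\<dots> \<le> L2" by (rule L2a)
  finally have "exp 16 \<le> L2" .
  hence L3a: "16 \<le> L3" unfolding L3_def using L2pos by (subst ln_ge_iff) auto
  have rb: "real b \<ge> real K - 1" using b K1 by linarith
  have "(real K - 1) * 16 \<le> real b * L3" using rb L3a K by (intro mult_mono) auto
  hence num: "(real K - 1) * 16 \<le> real b * L3" .
  have "8 \<le> (real K - 1) * 16 / (real K + 1)" using K by (simp add: field_simps)
  also have "\<dots> \<le> real b * L3 / (real K + 1)" using num K by (intro divide_right_mono) auto
  also have "\<dots> \<le> real b * L3 / L2" using L2pos L2b num K
    by (intro divide_left_mono) auto
  finally show ?thesis unfolding L3_def L2_def A_def M_def .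
qed

theorem lemma1p5:
  shows "limsup (\<lambda>m::nat. ereal (real (b_count m) * ln (ln (ln (real m))) / ln (ln (real m)))) \<ge> 8
         \<and> (\<forall>B. \<exists>m\<ge>1. b_count m > B)"
proof
  let ?f = "\<lambda>m::nat. ereal (real (b_count m) * ln (ln (ln (real m))) / ln (ln (real m)))"
  show "limsup ?f \<ge> 8" unfolding limsup_INF_SUP
  proof (rule INF_greatest)
    fix n :: nat assume "n \<in> UNIV"
    define K where "K = n + 2 * 3^16 + 1"
    have K: "real K \<ge> 2 * 3^16 + 1" by (simp add: K_def)
    define m where "m = 2^(2^K) + (1::nat)"
    have "n \<le> K" by (simp add: K_def)
    also have "K < 2 ^ K" by (rule less_exp)
    also have "(2::nat) ^ K < 2 ^ (2 ^ K)" by (rule power_strict_increasing) (auto intro: less_exp)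
    also have "\<dots> \<le> m" by (simp add: m_def)
    finally have nm: "m \<in> {n..}" by simp
    have bK: "b_count m \<ge> K - 1" unfolding m_def by (rule b_count_fermat) (simp add: K_def)
    have "8 \<le> ?f m" unfolding m_def using ratio_ge[OF K bK[unfolded m_def]] by simp
    thus "8 \<le> (SUP m\<in>{n..}. ?f m)" using nm by (rule SUP_upper2[rotated])
  qed
next
  show "\<forall>B. \<exists>m\<ge>1. b_count m > B"
  proof
    fix B :: nat
    have "b_count (2^(2^(B+2)) + 1) \<ge> (B + 2) - 1" by (rule b_count_fermat) simp
    hence "b_count (2^(2^(B+2)) + 1) > B" by simp
    moreover have "(2^(2^(B+2)) + 1 :: nat) \<ge> 1" by simp
    ultimately show "\<exists>m\<ge>1. b_count m > B" by blast
  qed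
qed


end
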